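(* Let $\alpha,\beta,\gamma,\varepsilon>0$, $0<\mu<1$, $\eta>1$, $\eta_D>1$, and consider the system of ODEs for $x=(V,S,D)$: \[ \dot V=\alpha(1-\mu)V\,\Omega(x)-\varepsilon V,\qquad \dot S=\beta VS\,\theta(x)-\varepsilon S,\qquad \dot D=(\alpha\mu+\gamma D)V\,\theta(x)-\varepsilon D, \] where $\Omega(x)=1-V-\eta S-\eta_D D$ and $\theta(x)=1-V-S-D$. Set $\sigma=1-\frac{\varepsilon}{\alpha(1-\mu)}$ and assume $\mu<1-\frac{\varepsilon}{\alpha}$ (equivalently $\sigma>0$). Let $\mathcal U=\{(V,S,D): V,S,D\ge0,\ V+S+D\le1\}$. Then a point $Q=(V_2,S_2,D_2)$ with $V_2,S_2,D_2>0$ is an equilibrium point of the system if and only if $Q\in\mathcal U$ and the following hold: (i) $D_2=\dfrac{\alpha\mu}{\beta-\gamma}$, which necessarily requires $\beta>\gamma$; moreover necessarily $D_2<\sigma/\eta_D$; (ii) $0<V_2<\sigma$ is a root of $V^2+MV+m=0$, where \[ M=\frac{\sigma-(\eta_D-\eta)D_2-\eta}{\eta-1},\qquad m=\frac{\eta\varepsilon}{\beta(\eta-1)}>0, \] i.e. $V_2=V_2^{\pm}=\frac{-M\pm\sqrt{M^2-4m}}{2}$, provided $M^2-4m\ge0$; (iii) $0<S_2<1$ is given by $S_2=1-V_2-D_2-\dfrac{\varepsilon}{\beta V_2}$.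
   Context: $V$, $S$, $D$ are the normalised concentrations of a helper virus, a satellite RNA, and defective interfering RNAs respectively; a point $Q$ with all three components positive is called a coexistence equilibrium. An equilibrium point is a zero of the right-hand side of the system. *)

theory Defs
  imports Complex_Main
begin

definition Omega :: "real \<Rightarrow> real \<Rightarrow> real \<times> real \<times> real \<Rightarrow> real" where
  "Omega eta etaD x = (case x of (V, S, D) \<Rightarrow> 1 - V - eta * S - etaD * D)"

definition theta :: "real \<times> real \<times> real \<Rightarrow> real" where
  "theta x = (case x of (V, S, D) \<Rightarrow> 1 - V - S - D)"

definition vfield ::
  "real \<Rightarrow> real \<Rightarrow> real \<Rightarrow> real \<Rightarrow> real \<Rightarrow> real \<Rightarrow> real \<Rightarrow>
   real \<times> real \<times> real \<Rightarrow> real \<times> real \<times> real" where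
  "vfield alpha beta gamma eps mu eta etaD x = (case x of (V, S, D) \<Rightarrow>
     (alpha * (1 - mu) * V * Omega eta etaD x - eps * V,
      beta * V * S * theta x - eps * S,
      (alpha * mu + gamma * D) * V * theta x - eps * D))"

definition is_equilibrium ::
  "real \<Rightarrow> real \<Rightarrow> real \<Rightarrow> real \<Rightarrow> real \<Rightarrow> real \<Rightarrow> real \<Rightarrow> real \<times> real \<times> real \<Rightarrow> bool" where
  "is_equilibrium alpha beta gamma eps mu eta etaD x \<longleftrightarrow>
     vfield alpha beta gamma eps mu eta etaD x = (0, 0, 0)"

definition U_set :: "(real \<times> real \<times> real) set" where
  "U_set = {(V, S, D). V \<ge> 0 \<and> S \<ge> 0 \<and> D \<ge> 0 \<and> V + S + D \<le> 1}"

definition sigma :: "real \<Rightarrow> real \<Rightarrow> real \<Rightarrow> real" where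
  "sigma alpha eps mu = 1 - eps / (alpha * (1 - mu))"

definition coefM :: "real \<Rightarrow> real \<Rightarrow> real \<Rightarrow> real \<Rightarrow> real \<Rightarrow> real \<Rightarrow> real" where
  "coefM alpha eps mu eta etaD D2 = (sigma alpha eps mu - (etaD - eta) * D2 - eta) / (eta - 1)"

definition coefm :: "real \<Rightarrow> real \<Rightarrow> real \<Rightarrow> real" where
  "coefm beta eps eta = eta * eps / (beta * (eta - 1))"

end

theory Submission
  imports Defs
begin

lemma quad_root:
  fixes V M m :: real
  assumes "V^2 + M*V + m = 0"
  shows "M^2 - 4*m \<ge> 0 \<and> (V = (-M + sqrt (M^2 - 4*m))/2 \<or> V = (-M - sqrt (M^2 - 4*m))/2)"
proof -
  have e: "M^2 - 4*m = (2*V+M)^2" using assms by (simp add: power2_eq_square algebra_simps)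
  have "sqrt (M^2 - 4*m) = \<bar>2*V+M\<bar>" using e by simp
  then show ?thesis using e by (auto simp: abs_if)
qed

theorem proposition2:
  fixes alpha beta gamma eps mu eta etaD V2 S2 D2 :: real
  assumes "alpha > 0" "beta > 0" "gamma > 0" "eps > 0"
    and "0 < mu" "mu < 1" "eta > 1" "etaD > 1"
    and "mu < 1 - eps / alpha"
    and "V2 > 0" "S2 > 0" "D2 > 0"
  shows "is_equilibrium alpha beta gamma eps mu eta etaD (V2, S2, D2) \<longleftrightarrow>
    ((V2, S2, D2) \<in> U_set \<and>
     (D2 = alpha * mu / (beta - gamma) \<and> beta > gamma \<and> D2 < sigma alpha eps mu / etaD) \<and>
     (0 < V2 \<and> V2 < sigma alpha eps mu \<and>
      V2\<^sup>2 + coefM alpha eps mu eta etaD D2 * V2 + coefm beta eps eta = 0 \<and>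
      coefm beta eps eta > 0 \<and>
      (coefM alpha eps mu eta etaD D2)\<^sup>2 - 4 * coefm beta eps eta \<ge> 0 \<and>
      (V2 = (- coefM alpha eps mu eta etaD D2
              + sqrt ((coefM alpha eps mu eta etaD D2)\<^sup>2 - 4 * coefm beta eps eta)) / 2 \<or>
       V2 = (- coefM alpha eps mu eta etaD D2
              - sqrt ((coefM alpha eps mu eta etaD D2)\<^sup>2 - 4 * coefm beta eps eta)) / 2)) \<and>
     (0 < S2 \<and> S2 < 1 \<and> S2 = 1 - V2 - D2 - eps / (beta * V2)))"
proof -
  define s where "s = sigma alpha eps mu"
  define M where "M = coefM alpha eps mu eta etaD D2"
  define m where "m = coefm beta eps eta"
  define th where "th = 1 - V2 - S2 - D2"
  have a1: "alpha * (1 - mu) > 0" using assms by simp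
  have s1: "1 - s = eps / (alpha * (1 - mu))" unfolding s_def sigma_def by simp
  have mpos: "m > 0" unfolding m_def coefm_def using assms by simp
  have E1: "alpha * (1 - mu) * V2 * (1 - V2 - eta * S2 - etaD * D2) - eps * V2 = 0
        \<longleftrightarrow> V2 + eta * S2 + etaD * D2 = s"
  proof -
    have "alpha * (1 - mu) * V2 * (1 - V2 - eta * S2 - etaD * D2) - eps * V2 = 0
       \<longleftrightarrow> alpha * (1 - mu) * (1 - V2 - eta * S2 - etaD * D2) = eps"
    proof -
      have "alpha * (1 - mu) * V2 * (1 - V2 - eta * S2 - etaD * D2) - eps * V2 =
            V2 * (alpha * (1 - mu) * (1 - V2 - eta * S2 - etaD * D2) - eps)" by (simp add: algebra_simps)
      thus ?thesis using assms(10) by simp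
    qed
    also have "\<dots> \<longleftrightarrow> 1 - V2 - eta * S2 - etaD * D2 = 1 - s"
      using a1 s1 by (metis (no_types, lifting) eq_divide_eq less_irrefl mult.commute)
    finally show ?thesis by linarith
  qed
  have E2: "beta * V2 * S2 * th - eps * S2 = 0 \<longleftrightarrow> S2 = 1 - V2 - D2 - eps / (beta * V2)"
  proof -
    have "beta * V2 * S2 * th - eps * S2 = 0 \<longleftrightarrow> beta * V2 * th = eps"
    proof -
      have "beta * V2 * S2 * th - eps * S2 = S2 * (beta * V2 * th - eps)" by (simp add: algebra_simps)
      thus ?thesis using assms(11) by simp
    qed
    also have "\<dots> \<longleftrightarrow> th = eps / (beta * V2)" using assms by (auto simp: field_simps)
    finally show ?thesis unfolding th_def by linarith
  qed
  have E3: "beta * V2 * th = eps \<Longrightarrow>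
      ((alpha * mu + gamma * D2) * V2 * th - eps * D2 = 0 \<longleftrightarrow>
       (D2 = alpha * mu / (beta - gamma) \<and> beta > gamma))"
  proof -
    assume h: "beta * V2 * th = eps"
    have "(alpha * mu + gamma * D2) * V2 * th - eps * D2 = 0 \<longleftrightarrow>
        (alpha * mu + gamma * D2) * (beta * V2 * th) = beta * eps * D2"
    proof -
      have "(alpha * mu + gamma * D2) * (beta * V2 * th) - beta * eps * D2 =
        beta * ((alpha * mu + gamma * D2) * V2 * th - eps * D2)" by (simp add: algebra_simps)
      thus ?thesis using assms(2) by (smt (verit) mult_eq_0_iff)
    qed
    also have "\<dots> \<longleftrightarrow> (alpha * mu + gamma * D2) * eps = beta * eps * D2" using h by simp
    also have "\<dots> \<longleftrightarrow> alpha * mu = (beta - gamma) * D2"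
    proof -
      have "(alpha * mu + gamma * D2) * eps - beta * eps * D2 = eps * (alpha * mu - (beta - gamma) * D2)"
        by (simp add: algebra_simps)
      thus ?thesis using assms(4) by (smt (verit) mult_eq_0_iff)
    qed
    also have "\<dots> \<longleftrightarrow> (D2 = alpha * mu / (beta - gamma) \<and> beta > gamma)"
    proof
      assume h2: "alpha * mu = (beta - gamma) * D2"
      have "alpha * mu > 0" using assms by simp
      hence "beta - gamma > 0" using h2 assms(12) by (metis zero_less_mult_pos2)
      thus "D2 = alpha * mu / (beta - gamma) \<and> beta > gamma" using h2 by (auto simp: field_simps)
    next
      assume "D2 = alpha * mu / (beta - gamma) \<and> beta > gamma"
      thus "alpha * mu = (beta - gamma) * D2" by (auto simp: field_simps)
    qed
    finally show ?thesis .
  qed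
  have Q: "S2 = 1 - V2 - D2 - eps / (beta * V2) \<Longrightarrow>
      (V2 + eta * S2 + etaD * D2 = s \<longleftrightarrow> V2^2 + M * V2 + m = 0)"
  proof -
    assume hS: "S2 = 1 - V2 - D2 - eps / (beta * V2)"
    have "V2 + eta * S2 + etaD * D2 = s \<longleftrightarrow>
        V2 * (V2 + eta * S2 + etaD * D2) = V2 * s" using assms(10) by auto
    also have "\<dots> \<longleftrightarrow> (1 - eta) * V2^2 + (eta - eta * D2 + etaD * D2 - s) * V2 - eta * eps / beta = 0"
    proof -
      have vs: "V2 * S2 = V2 - V2^2 - D2 * V2 - eps / beta" using hS assms(2,10)
        by (simp add: field_simps power2_eq_square)
      have "V2 * (V2 + eta * S2 + etaD * D2) - V2 * s =
        (1 - eta) * V2^2 + (eta - eta * D2 + etaD * D2 - s) * V2 - eta * eps / beta"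
      proof -
        have "V2 * (V2 + eta * S2 + etaD * D2) - V2 * s = V2^2 + eta * (V2 * S2) + etaD * D2 * V2 - V2 * s"
          by (simp add: algebra_simps power2_eq_square)
        also have "\<dots> = V2^2 + eta * (V2 - V2^2 - D2 * V2 - eps / beta) + etaD * D2 * V2 - V2 * s"
          by (simp only: vs)
        also have "\<dots> = (1 - eta) * V2^2 + (eta - eta * D2 + etaD * D2 - s) * V2 - eta * eps / beta"
          by (simp add: algebra_simps)
        finally show ?thesis .
      qed
      thus ?thesis by linarith
    qed
    also have "\<dots> \<longleftrightarrow> V2^2 + M * V2 + m = 0"
    proof -
      have e1: "(1 - eta) * M = eta - eta * D2 + etaD * D2 - s"
        unfolding M_def coefM_def s_def[symmetric] using assms(7) by (simp add: field_simps)
      have e2: "(1 - eta) * m = - (eta * eps / beta)"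
        unfolding m_def coefm_def using assms(2,7) by (simp add: field_simps)
      have "(1 - eta) * V2^2 + (eta - eta * D2 + etaD * D2 - s) * V2 - eta * eps / beta
          = (1 - eta) * (V2^2 + M * V2 + m)"
      proof -
        have "(1 - eta) * (V2^2 + M * V2 + m) = (1 - eta) * V2^2 + ((1 - eta) * M) * V2 + (1 - eta) * m"
          by (simp add: algebra_simps)
        thus ?thesis unfolding e1 e2 by simp
      qed
      thus ?thesis using assms(7) by simp
    qed
    finally show ?thesis .
  qed
  have EQ: "is_equilibrium alpha beta gamma eps mu eta etaD (V2, S2, D2) \<longleftrightarrow>
      (V2 + eta * S2 + etaD * D2 = s \<and> S2 = 1 - V2 - D2 - eps / (beta * V2) \<and>
       (alpha * mu + gamma * D2) * V2 * th - eps * D2 = 0)"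
    unfolding is_equilibrium_def vfield_def Omega_def theta_def
    apply (simp only: prod.case prod.inject flip: th_def)
    using E1 E2 by blast
  have thS: "S2 = 1 - V2 - D2 - eps / (beta * V2) \<Longrightarrow> beta * V2 * th = eps"
    unfolding th_def using assms(2,10) by (auto simp: field_simps)
  show ?thesis
    unfolding s_def[symmetric] M_def[symmetric] m_def[symmetric]
  proof
    assume "is_equilibrium alpha beta gamma eps mu eta etaD (V2, S2, D2)"
    hence h1: "V2 + eta * S2 + etaD * D2 = s" and h2: "S2 = 1 - V2 - D2 - eps / (beta * V2)"
      and h3: "(alpha * mu + gamma * D2) * V2 * th - eps * D2 = 0" using EQ by auto
    have D: "D2 = alpha * mu / (beta - gamma) \<and> beta > gamma" using E3[OF thS[OF h2]] h3 by simp
    have q: "V2^2 + M * V2 + m = 0" using Q[OF h2] h1 by simp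
    have ep: "eps / (beta * V2) > 0" using assms by simp
    have "D2 < s / etaD" using h1 assms by (simp add: field_simps)
      (smt (verit) assms(7) mult_pos_pos)
    moreover have "V2 < s" using h1 assms
      by (smt (verit) mult_pos_pos)
    moreover have "S2 < 1" using h2 ep assms(10,12) by linarith
    moreover have "(V2, S2, D2) \<in> U_set" unfolding U_set_def using h2 ep assms by auto
    ultimately show "(V2, S2, D2) \<in> U_set \<and>
     (D2 = alpha * mu / (beta - gamma) \<and> beta > gamma \<and> D2 < s / etaD) \<and>
     (0 < V2 \<and> V2 < s \<and> V2\<^sup>2 + M * V2 + m = 0 \<and> m > 0 \<and> M\<^sup>2 - 4 * m \<ge> 0 \<and>
      (V2 = (- M + sqrt (M\<^sup>2 - 4 * m)) / 2 \<or> V2 = (- M - sqrt (M\<^sup>2 - 4 * m)) / 2)) \<and>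
     (0 < S2 \<and> S2 < 1 \<and> S2 = 1 - V2 - D2 - eps / (beta * V2))"
      using D q quad_root[OF q] mpos h2 assms(10,11) by blast
  next
    assume h: "(V2, S2, D2) \<in> U_set \<and>
     (D2 = alpha * mu / (beta - gamma) \<and> beta > gamma \<and> D2 < s / etaD) \<and>
     (0 < V2 \<and> V2 < s \<and> V2\<^sup>2 + M * V2 + m = 0 \<and> m > 0 \<and> M\<^sup>2 - 4 * m \<ge> 0 \<and>
      (V2 = (- M + sqrt (M\<^sup>2 - 4 * m)) / 2 \<or> V2 = (- M - sqrt (M\<^sup>2 - 4 * m)) / 2)) \<and>
     (0 < S2 \<and> S2 < 1 \<and> S2 = 1 - V2 - D2 - eps / (beta * V2))"
    hence h2: "S2 = 1 - V2 - D2 - eps / (beta * V2)" by blast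
    show "is_equilibrium alpha beta gamma eps mu eta etaD (V2, S2, D2)"
      using EQ Q[OF h2] E3[OF thS[OF h2]] h by blast
  qed
qed

end
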